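(* Let $r>1$ and let $k,\ell,m$ be positive integers with $m\ge 12r$. Let $x_0\in R_1\cup\dots\cup R_\ell$ be a reservoir vertex of the $(k,\ell,m)$-superstar, and run the Moran process with fitness $r$ on the superstar with initial mutant $x_0$. Then the extinction probability is at least $1/(26r^2\ell)$.
   Context: Moran process: given a directed graph $G$ and fitness $r$, one vertex $x_0$ is a mutant, the rest non-mutants. At each step a vertex $v$ is chosen with probability proportional to fitness (mutants $r$, non-mutants $1$), an out-neighbour $w$ of $v$ is chosen uniformly at random and the state of $v$ is copied to $w$. Extinction: eventually no vertex is a mutant. The $(k,\ell,m)$-superstar has vertex set the disjoint union of reservoirs $R_1,\dots,R_\ell$ of size $m$, vertices $v_{i,j}$ ($i\in[\ell]$, $j\in[k]$), and a centre $v^*$; its edges are, for each $i\in[\ell]$: from $v^*$ to every vertex of $R_i$, from every vertex of $R_i$ to $v_{i,1}$, from $v_{i,j}$ to $v_{i,j+1}$ for $j\in[k-1]$, and from $v_{i,k}$ to $v^*$. *)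

theory Defs
  imports Complex_Main
begin

text \<open>A state of the Moran process is the set S of mutant vertices.\<close>

definition fitness :: "real \<Rightarrow> 'v set \<Rightarrow> 'v \<Rightarrow> real" where
  "fitness r S v = (if v \<in> S then r else 1)"

definition total_fitness :: "'v set \<Rightarrow> real \<Rightarrow> 'v set \<Rightarrow> real" where
  "total_fitness V r S = (\<Sum>v\<in>V. fitness r S v)"

definition moran_update :: "'v set \<Rightarrow> 'v \<Rightarrow> 'v \<Rightarrow> 'v set" where
  "moran_update S v w = (if v \<in> S then insert w S else S - {w})"

text \<open>One-step transition probability from mutant set S to mutant set S':
  v is chosen with probability proportional to fitness, then an out-neighbour w
  of v uniformly at random.\<close>
definition moran_trans :: "'v set \<Rightarrow> ('v \<Rightarrow> 'v set) \<Rightarrow> real \<Rightarrow> 'v set \<Rightarrow> 'v set \<Rightarrow> real" where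
  "moran_trans V out r S S' =
     (\<Sum>v\<in>V. \<Sum>w\<in>out v.
        (fitness r S v / total_fitness V r S) * (1 / real (card (out v))) *
        (if moran_update S v w = S' then 1 else 0))"

fun moran_dist :: "'v set \<Rightarrow> ('v \<Rightarrow> 'v set) \<Rightarrow> real \<Rightarrow> 'v \<Rightarrow> nat \<Rightarrow> 'v set \<Rightarrow> real" where
  "moran_dist V out r x0 0 S = (if S = {x0} then 1 else 0)"
| "moran_dist V out r x0 (Suc t) S' =
     (\<Sum>S\<in>Pow V. moran_dist V out r x0 t S * moran_trans V out r S S')"

text \<open>Extinction probability: probability that eventually no vertex is a mutant.
  Since the empty mutant set is absorbing, the events "extinct by time t" increase
  with t, so this is the supremum (= limit) of the probabilities of being extinct at time t.\<close>
definition extinction_prob :: "'v set \<Rightarrow> ('v \<Rightarrow> 'v set) \<Rightarrow> real \<Rightarrow> 'v \<Rightarrow> real" where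
  "extinction_prob V out r x0 = (SUP t. moran_dist V out r x0 t {})"

datatype ssv = Res nat nat   \<comment> \<open>Res i j: j-th vertex of reservoir R_i, i in [l], j in [m]\<close>
  | Path nat nat
  | Centre

definition reservoir :: "nat \<Rightarrow> nat \<Rightarrow> ssv set" where
  "reservoir m i = {Res i j | j. j \<in> {1..m}}"

definition superstar_verts :: "nat \<Rightarrow> nat \<Rightarrow> nat \<Rightarrow> ssv set" where
  "superstar_verts k l m =
     {Res i j | i j. i \<in> {1..l} \<and> j \<in> {1..m}} \<union>
     {Path i j | i j. i \<in> {1..l} \<and> j \<in> {1..k}} \<union> {Centre}"

fun superstar_out :: "nat \<Rightarrow> nat \<Rightarrow> nat \<Rightarrow> ssv \<Rightarrow> ssv set" where
  "superstar_out k l m Centre = (\<Union>i\<in>{1..l}. reservoir m i)"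
| "superstar_out k l m (Res i j) = {Path i 1}"
| "superstar_out k l m (Path i j) = (if j < k then {Path i (j + 1)} else {Centre})"

end

theory Submission imports Defs begin

definition wt :: "'v set \<Rightarrow> ('v \<Rightarrow> 'v set) \<Rightarrow> real \<Rightarrow> 'v set \<Rightarrow> 'v \<Rightarrow> 'v \<Rightarrow> real" where
  "wt V out r S v w = (fitness r S v / total_fitness V r S) * (1 / real (card (out v)))"

definition goodg :: "'v set \<Rightarrow> ('v \<Rightarrow> 'v set) \<Rightarrow> bool" where
  "goodg V out \<longleftrightarrow> finite V \<and> V \<noteq> {} \<and> (\<forall>v\<in>V. out v \<subseteq> V \<and> finite (out v) \<and> out v \<noteq> {})"

lemma trans_wt: "moran_trans V out r S S' =
   (\<Sum>v\<in>V. \<Sum>w\<in>out v. wt V out r S v w * (if moran_update S v w = S' then 1 else 0))"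
  unfolding moran_trans_def wt_def by simp

lemma tf_eq:
  assumes "finite V" "S \<subseteq> V"
  shows "total_fitness V r S = real (card V - card S) + r * real (card S)"
proof -
  have "total_fitness V r S = (\<Sum>v\<in>S. r) + (\<Sum>v\<in>V - S. 1)"
    unfolding total_fitness_def fitness_def
    using assms by (simp add: sum.If_cases Int_absorb1 Diff_eq)
  also have "\<dots> = r * real (card S) + real (card (V - S))" by simp
  also have "card (V - S) = card V - card S" using assms by (simp add: card_Diff_subset finite_subset)
  finally show ?thesis by simp
qed

lemma tf_pos:
  assumes "finite V" "V \<noteq> {}" "r > 0"
  shows "total_fitness V r S > 0"
  unfolding total_fitness_def fitness_def
  using assms by (intro sum_pos) auto

lemma wt_nonneg: assumes "goodg V out" "r > 0" shows "wt V out r S v w \<ge> 0"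
  using tf_pos[of V r S] assms unfolding wt_def goodg_def fitness_def by auto

lemma trans_nonneg: assumes "goodg V out" "r > 0" shows "moran_trans V out r S S' \<ge> 0"
  unfolding trans_wt using wt_nonneg[OF assms]
  by (intro sum_nonneg) auto

lemma wt_total: assumes "goodg V out" "r > 0"
  shows "(\<Sum>v\<in>V. \<Sum>w\<in>out v. wt V out r S v w) = 1"
proof -
  have W: "total_fitness V r S > 0" using tf_pos[of V r S] assms unfolding goodg_def by auto
  have "(\<Sum>v\<in>V. \<Sum>w\<in>out v. wt V out r S v w) = (\<Sum>v\<in>V. fitness r S v / total_fitness V r S)"
  proof (rule sum.cong)
    fix v assume v: "v \<in> V"
    hence c: "card (out v) > 0" using assms unfolding goodg_def by (auto simp: card_gt_0_iff)
    show "(\<Sum>w\<in>out v. wt V out r S v w) = fitness r S v / total_fitness V r S"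
      unfolding wt_def using c by simp
  qed simp
  also have "\<dots> = total_fitness V r S / total_fitness V r S"
    unfolding total_fitness_def by (simp only: sum_divide_distrib)
  also have "\<dots> = 1" using W by simp
  finally show ?thesis .
qed

lemma trans_sum: assumes "goodg V out" "r > 0" "S \<subseteq> V"
  shows "(\<Sum>S'\<in>Pow V. moran_trans V out r S S') = 1"
proof -
  have "(\<Sum>S'\<in>Pow V. moran_trans V out r S S') =
     (\<Sum>v\<in>V. \<Sum>w\<in>out v. \<Sum>S'\<in>Pow V. wt V out r S v w * (if moran_update S v w = S' then 1 else 0))"
    unfolding trans_wt by (simp add: sum.swap[of _ "Pow V"])
  also have "\<dots> = (\<Sum>v\<in>V. \<Sum>w\<in>out v. wt V out r S v w)"
  proof (intro sum.cong refl)
    fix v w assume v: "v \<in> V" and w: "w \<in> out v"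
    have "moran_update S v w \<in> Pow V" using assms v w unfolding goodg_def moran_update_def by auto
    moreover have "(\<Sum>S'\<in>Pow V. wt V out r S v w * (if moran_update S v w = S' then 1 else 0)) = (\<Sum>S'\<in>Pow V. if moran_update S v w = S' then wt V out r S v w else 0)"
      by (intro sum.cong) auto
    ultimately show "(\<Sum>S'\<in>Pow V. wt V out r S v w * (if moran_update S v w = S' then 1 else 0)) = wt V out r S v w"
      using assms(1) unfolding goodg_def by (simp add: sum.delta')
  qed
  also have "\<dots> = 1" by (rule wt_total[OF assms(1,2)])
  finally show ?thesis .
qed

lemma dist_nonneg: assumes "goodg V out" "r > 0" shows "moran_dist V out r x0 t S \<ge> 0"
  using assms by (induction t arbitrary: S) (auto intro!: sum_nonneg mult_nonneg_nonneg trans_nonneg)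

lemma dist_sum: assumes "goodg V out" "r > 0" "x0 \<in> V"
  shows "(\<Sum>S\<in>Pow V. moran_dist V out r x0 t S) = 1"
proof (induction t)
  case 0 then show ?case using assms unfolding goodg_def by (simp add: sum.delta)
next
  case (Suc t)
  have fin: "finite (Pow V)" using assms unfolding goodg_def by simp
  have "(\<Sum>S'\<in>Pow V. moran_dist V out r x0 (Suc t) S') =
      (\<Sum>S\<in>Pow V. moran_dist V out r x0 t S * (\<Sum>S'\<in>Pow V. moran_trans V out r S S'))"
    by (simp only: moran_dist.simps sum_distrib_left) (rule sum.swap)
  also have "\<dots> = (\<Sum>S\<in>Pow V. moran_dist V out r x0 t S)"
    using trans_sum[OF assms(1,2)] by (intro sum.cong) auto
  finally show ?case using Suc by simp
qed

lemma dist_le1: assumes "goodg V out" "r > 0" "x0 \<in> V"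
  shows "moran_dist V out r x0 t S \<le> 1"
proof (cases "S \<in> Pow V")
  case True
  have fin: "finite (Pow V)" using assms unfolding goodg_def by simp
  have "moran_dist V out r x0 t S \<le> (\<Sum>S\<in>Pow V. moran_dist V out r x0 t S)"
    using True fin dist_nonneg[OF assms(1,2)] by (intro member_le_sum) auto
  thus ?thesis using dist_sum[OF assms] by simp
next
  case False
  have "moran_dist V out r x0 t S = 0"
  proof (cases t)
    case 0 thus ?thesis using False assms(3) by auto
  next
    case (Suc t')
    have "moran_trans V out r S' S = 0" if "S' \<in> Pow V" for S'
      unfolding trans_wt
    proof (intro sum.neutral ballI)
      fix v w assume "v \<in> V" "w \<in> out v"
      hence "w \<in> V" using assms(1) unfolding goodg_def by blast
      hence "moran_update S' v w \<subseteq> V" using that unfolding moran_update_def by auto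
      hence "moran_update S' v w \<noteq> S" using False by auto
      thus "wt V out r S' v w * (if moran_update S' v w = S then 1 else 0) = 0" by simp
    qed
    thus ?thesis using Suc by simp
  qed
  thus ?thesis by simp
qed

lemma dist_step_lb:
  assumes "goodg V out" "r > 0" "T \<subseteq> Pow V"
  shows "moran_dist V out r x0 (Suc t) S' \<ge> (\<Sum>S\<in>T. moran_dist V out r x0 t S * moran_trans V out r S S')"
  using assms unfolding goodg_def
  by (simp, intro sum_mono2) (auto intro!: mult_nonneg_nonneg dist_nonneg trans_nonneg assms(1,2))

lemma trans_single:
  assumes "goodg V out" "r > 0" "v \<in> V" "w \<in> out v" "moran_update S v w = S'"
  shows "moran_trans V out r S S' \<ge> wt V out r S v w"
proof -
  have f: "finite V" "finite (out v)" using assms unfolding goodg_def by auto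
  have "wt V out r S v w = wt V out r S v w * (if moran_update S v w = S' then 1 else 0)" using assms by simp
  also have "\<dots> \<le> (\<Sum>w\<in>out v. wt V out r S v w * (if moran_update S v w = S' then 1 else 0))"
    using assms f wt_nonneg[OF assms(1,2)]
    by (intro member_le_sum) auto
  also have "\<dots> \<le> (\<Sum>v\<in>V. \<Sum>w\<in>out v. wt V out r S v w * (if moran_update S v w = S' then 1 else 0))"
    using assms f wt_nonneg[OF assms(1,2)]
    by (intro member_le_sum) (auto intro!: sum_nonneg)
  finally show ?thesis unfolding trans_wt .
qed

lemma trans_multi:
  assumes "goodg V out" "r > 0" "A \<subseteq> V" "\<And>v. v \<in> A \<Longrightarrow> f v \<in> out v \<and> moran_update S v (f v) = S'"
  shows "moran_trans V out r S S' \<ge> (\<Sum>v\<in>A. wt V out r S v (f v))"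
proof -
  have f: "finite V" "\<And>v. v \<in> V \<Longrightarrow> finite (out v)" using assms unfolding goodg_def by auto
  have "(\<Sum>v\<in>A. wt V out r S v (f v)) \<le> (\<Sum>v\<in>A. \<Sum>w\<in>out v. wt V out r S v w * (if moran_update S v w = S' then 1 else 0))"
  proof (rule sum_mono)
    fix v assume v: "v \<in> A"
    have "wt V out r S v (f v) = wt V out r S v (f v) * (if moran_update S v (f v) = S' then 1 else 0)" using assms v by simp
    also have "\<dots> \<le> (\<Sum>w\<in>out v. wt V out r S v w * (if moran_update S v w = S' then 1 else 0))"
      using assms v f wt_nonneg[OF assms(1,2)] \<open>A \<subseteq> V\<close>
      by (intro member_le_sum) auto
    finally show "wt V out r S v (f v) \<le> (\<Sum>w\<in>out v. wt V out r S v w * (if moran_update S v w = S' then 1 else 0))" .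
  qed
  also have "\<dots> \<le> (\<Sum>v\<in>V. \<Sum>w\<in>out v. wt V out r S v w * (if moran_update S v w = S' then 1 else 0))"
    using assms f wt_nonneg[OF assms(1,2)]
    by (intro sum_mono2) (auto intro!: sum_nonneg)
  finally show ?thesis unfolding trans_wt .
qed

lemma trans_stay:
  assumes "goodg V out" "r > 0"
  shows "moran_trans V out r S S = 1 - (\<Sum>v\<in>V. \<Sum>w\<in>out v. wt V out r S v w * (if moran_update S v w \<noteq> S then 1 else 0))"
proof -
  have "(\<Sum>v\<in>V. \<Sum>w\<in>out v. wt V out r S v w) = moran_trans V out r S S +
     (\<Sum>v\<in>V. \<Sum>w\<in>out v. wt V out r S v w * (if moran_update S v w \<noteq> S then 1 else 0))"
    unfolding trans_wt sum.distrib[symmetric] by (intro sum.cong refl) auto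
  thus ?thesis using wt_total[OF assms, of S] by simp
qed


fun sq :: "real \<Rightarrow> real \<Rightarrow> real \<Rightarrow> real \<Rightarrow> nat \<Rightarrow> real \<times> real \<times> real" where
  "sq A B G D 0 = (0, 1, 0)"
| "sq A B G D (Suc t) = (let x = sq A B G D t in
     (fst x + A * fst (snd x), (1 - A - B) * fst (snd x) + G * snd (snd x),
      B * fst (snd x) + (1 - G - D) * snd (snd x)))"

lemma sq_props:
  assumes "A > 0" "B \<ge> 0" "G \<ge> 0" "D > 0" "A + B \<le> 1" "G + D \<le> 1"
  defines "Q \<equiv> A * (G + D) + B * D"
  defines "p0 \<equiv> A * (G + D) / Q" and "p1 \<equiv> A * G / Q"
  defines "\<rho> \<equiv> max (1 - A) (1 - D)"
  shows "fst (snd (sq A B G D t)) \<ge> 0 \<and> snd (snd (sq A B G D t)) \<ge> 0 \<and>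
         fst (snd (sq A B G D t)) + snd (snd (sq A B G D t)) \<le> \<rho> ^ t \<and>
         fst (sq A B G D t) + p0 * fst (snd (sq A B G D t)) + p1 * snd (snd (sq A B G D t)) = p0"
proof (induction t)
  case 0 then show ?case by simp
next
  case (Suc t)
  obtain e u v where x: "sq A B G D t = (e, u, v)" by (metis prod.exhaust)
  have u: "u \<ge> 0" and v: "v \<ge> 0" and uv: "u + v \<le> \<rho> ^ t" and ph: "e + p0 * u + p1 * v = p0"
    using Suc x by auto
  have Q: "Q > 0" unfolding Q_def using assms by (simp add: add_pos_nonneg)
  have r0: "\<rho> \<ge> 0" unfolding \<rho>_def using assms by auto
  have "(1 - A - B) * u + G * v \<ge> 0" using assms u v by auto
  moreover have "B * u + (1 - G - D) * v \<ge> 0" using assms u v by auto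
  moreover have "(1 - A - B) * u + G * v + (B * u + (1 - G - D) * v) \<le> \<rho> ^ Suc t"
  proof -
    have "(1 - A - B) * u + G * v + (B * u + (1 - G - D) * v) = (1 - A) * u + (1 - D) * v"
      by (simp add: algebra_simps)
    also have "\<dots> \<le> \<rho> * u + \<rho> * v" unfolding \<rho>_def using u v
      by (intro add_mono mult_right_mono) auto
    also have "\<dots> = \<rho> * (u + v)" by (simp add: algebra_simps)
    also have "\<dots> \<le> \<rho> * \<rho> ^ t" using uv r0 by (intro mult_left_mono) auto
    finally show ?thesis by simp
  qed
  moreover have "e + A * u + p0 * ((1 - A - B) * u + G * v) + p1 * (B * u + (1 - G - D) * v) = p0"
  proof -
    have q0: "p0 * Q = A * (G + D)" and q1: "p1 * Q = A * G" unfolding p0_def p1_def using Q by auto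
    have "(A + p0 * (1 - A - B) + p1 * B - p0) * Q = A * Q - (A + B) * (p0 * Q) + B * (p1 * Q)"
      by (simp add: algebra_simps)
    also have "\<dots> = 0" by (simp only: q0 q1) (simp add: Q_def algebra_simps)
    finally have h1: "A + p0 * (1 - A - B) + p1 * B = p0" using Q by simp
    have "(p0 * G + p1 * (1 - G - D) - p1) * Q = G * (p0 * Q) - (G + D) * (p1 * Q)"
      by (simp add: algebra_simps)
    also have "\<dots> = 0" unfolding q0 q1 by (simp add: algebra_simps)
    finally have h2: "p0 * G + p1 * (1 - G - D) = p1" using Q by simp
    have "e + A * u + p0 * ((1 - A - B) * u + G * v) + p1 * (B * u + (1 - G - D) * v)
        = e + (A + p0 * (1 - A - B) + p1 * B) * u + (p0 * G + p1 * (1 - G - D)) * v"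
      by (simp add: algebra_simps)
    also have "\<dots> = p0" using h1 h2 ph by simp
    finally show ?thesis .
  qed
  ultimately show ?case using x by (simp add: Let_def)
qed


lemma V_eq: "superstar_verts k l m = (\<lambda>p. Res (fst p) (snd p)) ` ({1..l}\<times>{1..m}) \<union>
   (\<lambda>p. Path (fst p) (snd p)) ` ({1..l}\<times>{1..k}) \<union> {Centre}"
proof -
  have a: "{Res i j | i j. i \<in> {1..l} \<and> j \<in> {1..m}} = (\<lambda>p. Res (fst p) (snd p)) ` ({1..l}\<times>{1..m})"
  proof (intro equalityI subsetI)
    fix x assume "x \<in> {Res i j | i j. i \<in> {1..l} \<and> j \<in> {1..m}}"
    then obtain i j where "x = Res i j" "i \<in> {1..l}" "j \<in> {1..m}" by blast
    thus "x \<in> (\<lambda>p. Res (fst p) (snd p)) ` ({1..l}\<times>{1..m})" by (intro image_eqI[where x="(i,j)"]) auto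
  qed auto
  have b: "{Path i j | i j. i \<in> {1..l} \<and> j \<in> {1..k}} = (\<lambda>p. Path (fst p) (snd p)) ` ({1..l}\<times>{1..k})"
  proof (intro equalityI subsetI)
    fix x assume "x \<in> {Path i j | i j. i \<in> {1..l} \<and> j \<in> {1..k}}"
    then obtain i j where "x = Path i j" "i \<in> {1..l}" "j \<in> {1..k}" by blast
    thus "x \<in> (\<lambda>p. Path (fst p) (snd p)) ` ({1..l}\<times>{1..k})" by (intro image_eqI[where x="(i,j)"]) auto
  qed auto
  show ?thesis unfolding superstar_verts_def a b ..
qed

lemma outC: "superstar_out k l m Centre = (\<lambda>p. Res (fst p) (snd p)) ` ({1..l}\<times>{1..m})"
proof (intro equalityI subsetI)
  fix x assume "x \<in> superstar_out k l m Centre"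
  then obtain i j where "x = Res i j" "i \<in> {1..l}" "j \<in> {1..m}" by (auto simp: reservoir_def)
  thus "x \<in> (\<lambda>p. Res (fst p) (snd p)) ` ({1..l}\<times>{1..m})" by (intro image_eqI[where x="(i,j)"]) auto
qed (auto simp: reservoir_def)

lemma card_outC: "card (superstar_out k l m Centre) = l * m"
proof -
  have "inj_on (\<lambda>p. Res (fst p) (snd p)) ({1..l}\<times>{1..m})" by (auto simp: inj_on_def)
  thus ?thesis unfolding outC by (simp add: card_image)
qed

lemma fin_V: "finite (superstar_verts k l m)" unfolding V_eq by simp

lemma good_ss: assumes "k \<ge> 1" "l \<ge> 1" "m \<ge> 1"
  shows "goodg (superstar_verts k l m) (superstar_out k l m)"
  unfolding goodg_def
proof (intro conjI)
  show "finite (superstar_verts k l m)" by (rule fin_V)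
  show "superstar_verts k l m \<noteq> {}" unfolding superstar_verts_def by auto
  show "\<forall>v\<in>superstar_verts k l m. superstar_out k l m v \<subseteq> superstar_verts k l m \<and> finite (superstar_out k l m v) \<and> superstar_out k l m v \<noteq> {}"
  proof
  fix v assume v: "v \<in> superstar_verts k l m"
  show "superstar_out k l m v \<subseteq> superstar_verts k l m \<and> finite (superstar_out k l m v) \<and> superstar_out k l m v \<noteq> {}"
  proof (cases v)
    case (Res i j) thus ?thesis using v assms unfolding superstar_verts_def by auto
  next
    case (Path i j) thus ?thesis using v assms unfolding superstar_verts_def by auto
  next
    case Centre
    hence "superstar_out k l m v = (\<lambda>p. Res (fst p) (snd p)) ` ({1..l}\<times>{1..m})" using outC by simp
    thus ?thesis using assms unfolding V_eq by auto
  qed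
  qed
qed


lemma final_arith:
  fixes r l m W0 W1 :: real
  assumes r: "r > 1" and l: "l \<ge> 1" and m: "m \<ge> 12" and W0: "W0 > 0" and W1: "W1 > 0"
  defines "L \<equiv> l * m"
  defines "A0 \<equiv> 1 / (W0 * L)" and "B0 \<equiv> r / W0" and "G \<equiv> (m - 1) / W1" and "D \<equiv> (r + 1 / L) / W1"
  shows "1 / (26 * r\<^sup>2 * l) \<le> A0 * (G + D) / (A0 * (G + D) + B0 * D)"
proof -
  have L: "L \<ge> 12" unfolding L_def using mult_mono[of 1 l 12 m] l m by simp
  define X where "X = m - 1 + r + 1 / L"
  define Y where "Y = r * (r * L + 1)"
  have X: "X \<ge> m" unfolding X_def using r L by (simp add: add_increasing2)
  have Xp: "X > 0" using X m by simp
  have Yp: "Y > 0" unfolding Y_def using r L by (simp add: add_pos_pos)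
  have eq: "A0 * (G + D) / (A0 * (G + D) + B0 * D) = X / (X + Y)"
  proof -
    have Z: "W0 * L * W1 > 0" using W0 W1 L by simp
    have gd: "G + D = X / W1" unfolding G_def D_def X_def by (simp add: add_divide_distrib)
    have a: "A0 * (G + D) = X / (W0 * L * W1)" unfolding A0_def gd by simp
    have b: "B0 * D = Y / (W0 * L * W1)" unfolding B0_def D_def Y_def using L W0 W1 by (simp add: field_simps)
    show ?thesis unfolding a b using Z W0 W1 L by (simp add: add_divide_distrib[symmetric])
  qed
  have r2: "r\<^sup>2 \<ge> r" using r by (simp add: power2_eq_square)
  have rl: "r\<^sup>2 * l \<ge> 1" using mult_mono[of 1 "r\<^sup>2" 1 l] r l r2 by simp
  have "Y = r\<^sup>2 * l * m + r" unfolding Y_def L_def by (simp add: algebra_simps power2_eq_square)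
  also have "\<dots> \<le> r\<^sup>2 * l * m + r\<^sup>2 * l * m"
  proof -
    have "r \<le> r\<^sup>2 * 1 * 1" using r2 by simp
    also have "\<dots> \<le> r\<^sup>2 * l * m" using l m by (intro mult_mono) auto
    finally show ?thesis by linarith
  qed
  also have "\<dots> = 2 * (r\<^sup>2 * l) * m" by (simp add: algebra_simps)
  also have "\<dots> \<le> 2 * (r\<^sup>2 * l) * X" using X rl by (intro mult_left_mono) auto
  also have "\<dots> \<le> 25 * (r\<^sup>2 * l) * X" using X rl m by (intro mult_right_mono) auto
  finally have h: "Y \<le> 25 * (r\<^sup>2 * l) * X" .
  have h2: "X * 1 \<le> X * (r\<^sup>2 * l)" by (rule mult_left_mono) (use rl Xp in auto)
  have "26 * r\<^sup>2 * l * X = 25 * (r\<^sup>2 * l) * X + X * (r\<^sup>2 * l)" by (simp add: algebra_simps)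
  hence "X + Y \<le> 26 * r\<^sup>2 * l * X" using h h2 by linarith
  hence "1 / (26 * r\<^sup>2 * l) \<le> X / (X + Y)"
    using Xp Yp rl by (simp add: divide_simps mult.commute)
  thus ?thesis unfolding eq .
qed


lemma mono_prod: "(x::real) \<le> a \<Longrightarrow> c \<le> b \<Longrightarrow> 0 \<le> a \<Longrightarrow> 0 \<le> c \<Longrightarrow> x * c \<le> a * b"
  by (rule mult_mono)

theorem lemma4p3:
  fixes r :: real and k l m :: nat and x0 :: ssv
  assumes "r > 1" and "k \<ge> 1" and "l \<ge> 1" and "m \<ge> 1"
    and "real m \<ge> 12 * r"
    and "x0 \<in> (\<Union>i\<in>{1..l}. reservoir m i)"
  shows "extinction_prob (superstar_verts k l m) (superstar_out k l m) r x0
           \<ge> 1 / (26 * r\<^sup>2 * real l)"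
proof -
  define V where "V = superstar_verts k l m"
  define out where "out = superstar_out k l m"
  obtain i j0 where x0: "x0 = Res i j0" and i: "i \<in> {1..l}" and j0: "j0 \<in> {1..m}"
    using assms(6) by (auto simp: reservoir_def)
  define P1 where "P1 = Path i 1"
  have r0: "r > 0" using assms by simp
  have good: "goodg V out" unfolding V_def out_def using good_ss assms by simp
  have finV: "finite V" unfolding V_def by (rule fin_V)
  have x0V: "x0 \<in> V" unfolding V_def superstar_verts_def x0 using i j0 by auto
  have P1V: "P1 \<in> V" unfolding V_def superstar_verts_def P1_def using i assms by auto
  have CV: "Centre \<in> V" unfolding V_def superstar_verts_def by auto
  have outC': "out Centre = (\<lambda>p. Res (fst p) (snd p)) ` ({1..l}\<times>{1..m})" unfolding out_def by (rule outC)
  have x0C: "x0 \<in> out Centre" unfolding outC' x0 using i j0 by (intro image_eqI[where x="(i,j0)"]) auto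
  have cardC: "card (out Centre) = l * m" unfolding out_def by (rule card_outC)
  have finC: "finite (out Centre)" unfolding outC' by simp
  have outx0: "out x0 = {P1}" unfolding out_def x0 P1_def by simp
  define N where "N = card V"
  define Ri where "Ri = Res i ` {1..m}"
  have cRi: "card Ri = m" unfolding Ri_def by (simp add: card_image inj_on_def)
  have RiV: "Ri \<subseteq> V" unfolding Ri_def V_def superstar_verts_def using i by auto
  have NN: "N \<ge> m + 2"
  proof -
    have f: "finite Ri" "Centre \<notin> Ri" "P1 \<notin> insert Centre Ri" unfolding Ri_def P1_def by auto
    have "card (insert P1 (insert Centre Ri)) = m + 2"
      using cRi f by simp
    moreover have "insert P1 (insert Centre Ri) \<subseteq> V" using RiV P1V CV by auto
    ultimately show ?thesis unfolding N_def using card_mono[OF finV] by metis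
  qed
  define S0 where "S0 = {x0}"
  define S1 where "S1 = {x0, P1}"
  have x0P1: "x0 \<noteq> P1" unfolding x0 P1_def by simp
  define W0 where "W0 = real N - 1 + r"
  define W1 where "W1 = real N - 2 + 2 * r"
  have tf0: "total_fitness V r S0 = W0"
    using tf_eq[OF finV, of S0 r] x0V NN unfolding S0_def W0_def N_def by (simp add: of_nat_diff)
  have tf1: "total_fitness V r S1 = W1"
    using tf_eq[OF finV, of S1 r] x0V P1V NN x0P1 unfolding S1_def W1_def N_def by (simp add: of_nat_diff)
  have W0p: "W0 > 0" and W1p: "W1 > 0" unfolding W0_def W1_def using NN r0 by auto
  define L where "L = real l * real m"
  have L1: "L \<ge> 1" unfolding L_def using mult_mono[of 1 "real l" 1 "real m"] assms(3,4) by simp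
  define A0 where "A0 = 1 / (W0 * L)"
  define B0 where "B0 = r / W0"
  define G where "G = (real m - 1) / W1"
  define D where "D = (r + 1 / L) / W1"
  have T1: "moran_trans V out r S0 {} \<ge> A0"
  proof -
    have "moran_trans V out r S0 {} \<ge> wt V out r S0 Centre x0"
      by (rule trans_single[OF good r0 CV x0C]) (simp add: moran_update_def S0_def x0)
    moreover have "wt V out r S0 Centre x0 = A0"
      unfolding wt_def tf0 cardC A0_def L_def by (simp add: fitness_def S0_def x0)
    ultimately show ?thesis by simp
  qed
  have T2: "moran_trans V out r S0 S1 \<ge> B0"
  proof -
    have "moran_trans V out r S0 S1 \<ge> wt V out r S0 x0 P1"
      by (rule trans_single[OF good r0 x0V]) (auto simp: moran_update_def S0_def S1_def outx0)
    moreover have "wt V out r S0 x0 P1 = B0"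
      unfolding wt_def tf0 outx0 B0_def by (simp add: fitness_def S0_def)
    ultimately show ?thesis by simp
  qed
  define Ai where "Ai = Res i ` ({1..m} - {j0})"
  have cAi: "real (card Ai) = real m - 1"
  proof -
    have "card Ai = card ({1..m} - {j0})" unfolding Ai_def by (simp add: card_image inj_on_def)
    also have "\<dots> = m - 1" using j0 by simp
    finally show ?thesis using assms(4) by (simp add: of_nat_diff)
  qed
  have AiV: "Ai \<subseteq> V" unfolding Ai_def V_def superstar_verts_def using i by auto
  have T4: "moran_trans V out r S1 S0 \<ge> G"
  proof -
    have "moran_trans V out r S1 S0 \<ge> (\<Sum>v\<in>Ai. wt V out r S1 v P1)"
    proof (rule trans_multi[OF good r0 AiV])
      fix v assume "v \<in> Ai"
      then obtain j where v: "v = Res i j" "j \<noteq> j0" unfolding Ai_def by auto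
      show "P1 \<in> out v \<and> moran_update S1 v P1 = S0"
        unfolding v out_def P1_def moran_update_def S1_def S0_def x0 using v by auto
    qed
    moreover have "(\<Sum>v\<in>Ai. wt V out r S1 v P1) = G"
    proof -
      have "(\<Sum>v\<in>Ai. wt V out r S1 v P1) = (\<Sum>v\<in>Ai. 1 / W1)"
      proof (rule sum.cong[OF refl])
        fix v assume "v \<in> Ai"
        then obtain j where v: "v = Res i j" "j \<noteq> j0" unfolding Ai_def by auto
        show "wt V out r S1 v P1 = 1 / W1"
          unfolding wt_def tf1 v out_def by (simp add: fitness_def S1_def x0 P1_def v)
      qed
      thus ?thesis using cAi unfolding G_def by simp
    qed
    ultimately show ?thesis by simp
  qed
  have T6: "moran_trans V out r {} {} \<ge> 1"
  proof -
    have "(\<Sum>v\<in>V. \<Sum>w\<in>out v. wt V out r {} v w * (if moran_update {} v w \<noteq> {} then 1 else 0)) = 0"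
      by (intro sum.neutral ballI) (simp add: moran_update_def)
    thus ?thesis using trans_stay[OF good r0, of "{}"] by simp
  qed
  have T3: "moran_trans V out r S0 S0 \<ge> 1 - A0 - B0"
  proof -
    define g where "g v = (\<Sum>w\<in>out v. wt V out r S0 v w * (if moran_update S0 v w \<noteq> S0 then 1 else 0))" for v
    have "(\<Sum>v\<in>V. g v) = (\<Sum>v\<in>{x0, Centre}. g v)"
    proof (rule sum.mono_neutral_right[OF finV])
      show "{x0, Centre} \<subseteq> V" using x0V CV by auto
      show "\<forall>v\<in>V - {x0, Centre}. g v = 0"
      proof
        fix v assume v: "v \<in> V - {x0, Centre}"
        have "\<forall>w\<in>out v. moran_update S0 v w = S0"
        proof (cases v)
          case (Res a b) thus ?thesis using v unfolding out_def moran_update_def S0_def x0 by auto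
        next
          case (Path a b) thus ?thesis using v unfolding out_def moran_update_def S0_def x0 by auto
        next
          case Centre thus ?thesis using v by auto
        qed
        thus "g v = 0" unfolding g_def by (intro sum.neutral) auto
      qed
    qed
    also have "\<dots> = g x0 + g Centre" unfolding x0 by simp
    also have "g x0 = B0"
    proof -
      have "g x0 = wt V out r S0 x0 P1" unfolding g_def outx0 using x0P1
        by (simp add: moran_update_def S0_def)
      also have "\<dots> = B0" unfolding wt_def tf0 outx0 B0_def by (simp add: fitness_def S0_def)
      finally show ?thesis .
    qed
    also have "g Centre = A0"
    proof -
      have "g Centre = (\<Sum>w\<in>out Centre. if w = x0 then A0 else 0)"
        unfolding g_def
      proof (rule sum.cong[OF refl])
        fix w assume "w \<in> out Centre"
        have "wt V out r S0 Centre w = A0"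
          unfolding wt_def tf0 cardC A0_def L_def by (simp add: fitness_def S0_def x0)
        moreover have "(moran_update S0 Centre w \<noteq> S0) = (w = x0)"
          by (auto simp: moran_update_def S0_def x0)
        ultimately show "wt V out r S0 Centre w * (if moran_update S0 Centre w \<noteq> S0 then 1 else 0) = (if w = x0 then A0 else 0)"
          by simp
      qed
      also have "\<dots> = A0" using finC x0C by (simp add: sum.delta)
      finally show ?thesis .
    qed
    finally have "(\<Sum>v\<in>V. g v) = B0 + A0" .
    thus ?thesis using trans_stay[OF good r0, of S0] unfolding g_def by simp
  qed
  have outP1: "out P1 = {if 1 < k then Path i 2 else Centre}" unfolding out_def P1_def by simp
  have T5: "moran_trans V out r S1 S1 \<ge> 1 - G - D"
  proof -
    define g where "g v = (\<Sum>w\<in>out v. wt V out r S1 v w * (if moran_update S1 v w \<noteq> S1 then 1 else 0))" for v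
    have "(\<Sum>v\<in>V. g v) = (\<Sum>v\<in>insert Centre (insert P1 Ai). g v)"
    proof (rule sum.mono_neutral_right[OF finV])
      show "insert Centre (insert P1 Ai) \<subseteq> V" using AiV P1V CV by auto
      show "\<forall>v\<in>V - insert Centre (insert P1 Ai). g v = 0"
      proof
        fix v assume v: "v \<in> V - insert Centre (insert P1 Ai)"
        have "\<forall>w\<in>out v. moran_update S1 v w = S1"
        proof (cases v)
          case (Res a b)
          have b: "b \<in> {1..m}" using v Res unfolding V_def superstar_verts_def by auto
          show ?thesis
          proof (cases "a = i \<and> b = j0")
            case True thus ?thesis using Res unfolding out_def moran_update_def S1_def x0 P1_def by auto
          next
            case False
            have "a \<noteq> i" using False b v Res unfolding Ai_def by auto
            thus ?thesis using Res unfolding out_def moran_update_def S1_def x0 P1_def by auto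
          qed
        next
          case (Path a b)
          have b: "b \<ge> 1" using v Path unfolding V_def superstar_verts_def by auto
          have "v \<noteq> P1" using v by auto
          thus ?thesis using Path b unfolding out_def moran_update_def S1_def x0 P1_def by auto
        next
          case Centre thus ?thesis using v by auto
        qed
        thus "g v = 0" unfolding g_def by (intro sum.neutral) auto
      qed
    qed
    also have "\<dots> = g Centre + (g P1 + (\<Sum>v\<in>Ai. g v))"
    proof -
      have f: "finite Ai" "Centre \<notin> insert P1 Ai" "P1 \<notin> Ai" unfolding Ai_def P1_def by auto
      thus ?thesis by simp
    qed
    also have "g P1 = r / W1"
    proof -
      have wn: "(if 1 < k then Path i 2 else Centre) \<notin> S1" by (simp add: S1_def x0 P1_def)
      have p: "P1 \<in> S1" by (simp add: S1_def)
      have ne: "moran_update S1 P1 (if 1 < k then Path i 2 else Centre) \<noteq> S1"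
        using wn p unfolding moran_update_def by (metis insertI1)
      have "g P1 = wt V out r S1 P1 (if 1 < k then Path i 2 else Centre)" unfolding g_def outP1
        using ne by simp
      also have "\<dots> = r / W1" unfolding wt_def tf1 outP1 by (simp add: fitness_def S1_def)
      finally show ?thesis .
    qed
    also have "g Centre = 1 / (W1 * L)"
    proof -
      have "g Centre = (\<Sum>w\<in>out Centre. if w = x0 then 1 / (W1 * L) else 0)"
        unfolding g_def
      proof (rule sum.cong[OF refl])
        fix w assume w: "w \<in> out Centre"
        have "wt V out r S1 Centre w = 1 / (W1 * L)"
          unfolding wt_def tf1 cardC L_def by (simp add: fitness_def S1_def x0 P1_def)
        moreover have "w \<noteq> P1" using w unfolding outC' P1_def by auto
        moreover have "(moran_update S1 Centre w \<noteq> S1) = (w = x0 \<or> w = P1)"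
          by (auto simp: moran_update_def S1_def x0 P1_def)
        ultimately show "wt V out r S1 Centre w * (if moran_update S1 Centre w \<noteq> S1 then 1 else 0) = (if w = x0 then 1 / (W1 * L) else 0)"
          by simp
      qed
      also have "\<dots> = 1 / (W1 * L)" using finC x0C by (simp add: sum.delta)
      finally show ?thesis .
    qed
    also have "(\<Sum>v\<in>Ai. g v) = G"
    proof -
      have "(\<Sum>v\<in>Ai. g v) = (\<Sum>v\<in>Ai. 1 / W1)"
      proof (rule sum.cong[OF refl])
        fix v assume "v \<in> Ai"
        then obtain j where v: "v = Res i j" "j \<noteq> j0" unfolding Ai_def by auto
        have vn: "v \<notin> S1" using v by (simp add: S1_def x0 P1_def)
        have p: "P1 \<in> S1" by (simp add: S1_def)
        have ne: "moran_update S1 v P1 \<noteq> S1" using vn p unfolding moran_update_def by auto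
        have ov: "out v = {P1}" unfolding out_def v P1_def by simp
        show "g v = 1 / W1"
          unfolding g_def ov using ne by (simp add: wt_def tf1 ov fitness_def vn)
      qed
      thus ?thesis using cAi unfolding G_def by simp
    qed
    finally have "(\<Sum>v\<in>V. g v) = G + D" unfolding D_def using W1p L1 by (simp add: field_simps)
    thus ?thesis using trans_stay[OF good r0, of S1] unfolding g_def by simp
  qed
  have NL: "real N \<ge> real m + 2" using NN by simp
  have iL: "1 / L \<le> 1" using L1 by simp
  have A0p: "A0 > 0" unfolding A0_def using W0p L1 by simp
  have B0p: "B0 \<ge> 0" unfolding B0_def using W0p r0 by simp
  have Gp: "G \<ge> 0" unfolding G_def using W1p assms(4) by simp
  have Dp: "D > 0" unfolding D_def using W1p r0 L1 by (simp add: add_pos_nonneg)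
  have AB1: "A0 + B0 \<le> 1"
  proof -
    have "A0 + B0 = (1 / L + r) / W0" unfolding A0_def B0_def by (simp add: add_divide_distrib)
    also have "\<dots> \<le> 1" using W0p iL NL unfolding W0_def by simp
    finally show ?thesis .
  qed
  have GD1: "G + D \<le> 1"
  proof -
    have "G + D = (real m - 1 + (r + 1 / L)) / W1" unfolding G_def D_def by (simp add: add_divide_distrib)
    also have "\<dots> \<le> 1" using W1p iL NL assms(1) unfolding W1_def by simp
    finally show ?thesis .
  qed
  have S0V: "S0 \<in> Pow V" and S1V: "S1 \<in> Pow V" and EV: "{} \<in> Pow V"
    using x0V P1V unfolding S0_def S1_def by auto
  have S01: "S0 \<noteq> S1" unfolding S0_def S1_def using x0P1 by auto
  have S0e: "S0 \<noteq> {}" unfolding S0_def by simp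
  let ?d = "moran_dist V out r x0"
  let ?sq = "sq A0 B0 G D"
  note SP = sq_props[OF A0p B0p Gp Dp AB1 GD1]
  have IND: "?d t {} \<ge> fst (?sq t) \<and> ?d t S0 \<ge> fst (snd (?sq t)) \<and> ?d t S1 \<ge> snd (snd (?sq t))" for t
  proof (induction t)
    case 0 then show ?case using S01 by (simp add: S0_def)
  next
    case (Suc t)
    obtain e u v where x: "?sq t = (e, u, v)" by (metis prod.exhaust)
    have IH: "?d t {} \<ge> e" "?d t S0 \<ge> u" "?d t S1 \<ge> v" using Suc x by auto
    have uv: "u \<ge> 0" "v \<ge> 0" using SP[of t] x by auto
    have dn: "\<And>S. ?d t S \<ge> 0" by (rule dist_nonneg[OF good r0])
    have 1: "?d (Suc t) {} \<ge> e + u * A0"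
    proof -
      have "?d (Suc t) {} \<ge> (\<Sum>S\<in>{{}, S0}. ?d t S * moran_trans V out r S {})"
        by (rule dist_step_lb[OF good r0]) (use EV S0V in auto)
      moreover have "(\<Sum>S\<in>{{}, S0}. ?d t S * moran_trans V out r S {}) = ?d t {} * moran_trans V out r {} {} + ?d t S0 * moran_trans V out r S0 {}"
        using S0e by simp
      moreover have "?d t {} * moran_trans V out r {} {} \<ge> e * 1" by (rule mono_prod) (use IH T6 dn in auto)
      moreover have "?d t S0 * moran_trans V out r S0 {} \<ge> u * A0" by (rule mono_prod) (use IH T1 dn A0p in auto)
      ultimately show ?thesis by linarith
    qed
    have 2: "?d (Suc t) S0 \<ge> u * (1 - A0 - B0) + v * G"
    proof -
      have "?d (Suc t) S0 \<ge> (\<Sum>S\<in>{S0, S1}. ?d t S * moran_trans V out r S S0)"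
        by (rule dist_step_lb[OF good r0]) (use S1V S0V in auto)
      moreover have "(\<Sum>S\<in>{S0, S1}. ?d t S * moran_trans V out r S S0) = ?d t S0 * moran_trans V out r S0 S0 + ?d t S1 * moran_trans V out r S1 S0"
        using S01 by simp
      moreover have "?d t S0 * moran_trans V out r S0 S0 \<ge> u * (1 - A0 - B0)" by (rule mono_prod) (use IH T3 dn AB1 in auto)
      moreover have "?d t S1 * moran_trans V out r S1 S0 \<ge> v * G" by (rule mono_prod) (use IH T4 dn Gp in auto)
      ultimately show ?thesis by linarith
    qed
    have 3: "?d (Suc t) S1 \<ge> u * B0 + v * (1 - G - D)"
    proof -
      have "?d (Suc t) S1 \<ge> (\<Sum>S\<in>{S0, S1}. ?d t S * moran_trans V out r S S1)"
        by (rule dist_step_lb[OF good r0]) (use S1V S0V in auto)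
      moreover have "(\<Sum>S\<in>{S0, S1}. ?d t S * moran_trans V out r S S1) = ?d t S0 * moran_trans V out r S0 S1 + ?d t S1 * moran_trans V out r S1 S1"
        using S01 by simp
      moreover have "?d t S0 * moran_trans V out r S0 S1 \<ge> u * B0" by (rule mono_prod) (use IH T2 dn B0p in auto)
      moreover have "?d t S1 * moran_trans V out r S1 S1 \<ge> v * (1 - G - D)" by (rule mono_prod) (use IH T5 dn GD1 in auto)
      ultimately show ?thesis by linarith
    qed
    show ?case using 1 2 3 x by (simp add: Let_def algebra_simps)
  qed
  define Q where "Q = A0 * (G + D) + B0 * D"
  define p0 where "p0 = A0 * (G + D) / Q"
  define p1 where "p1 = A0 * G / Q"
  define \<rho> where "\<rho> = max (1 - A0) (1 - D)"
  have Qp: "Q > 0" unfolding Q_def using A0p Gp Dp B0p by (simp add: add_pos_nonneg)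
  have p0le: "p0 \<le> 1" unfolding p0_def Q_def using Qp[unfolded Q_def] B0p Dp by simp
  have p1le: "p1 \<le> 1"
  proof -
    have "p1 \<le> p0" unfolding p0_def p1_def using Qp A0p Dp by (intro divide_right_mono) auto
    thus ?thesis using p0le by simp
  qed
  have Ebound: "?d t {} \<ge> p0 - \<rho> ^ t" for t
  proof -
    have h: "fst (snd (?sq t)) \<ge> 0" "snd (snd (?sq t)) \<ge> 0"
      "fst (snd (?sq t)) + snd (snd (?sq t)) \<le> \<rho> ^ t"
      "fst (?sq t) + p0 * fst (snd (?sq t)) + p1 * snd (snd (?sq t)) = p0"
      using SP[of t] unfolding p0_def p1_def \<rho>_def Q_def by auto
    have "p0 * fst (snd (?sq t)) \<le> fst (snd (?sq t))" using mult_right_mono[OF p0le h(1)] by simp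
    moreover have "p1 * snd (snd (?sq t)) \<le> snd (snd (?sq t))" using mult_right_mono[OF p1le h(2)] by simp
    ultimately have "fst (?sq t) \<ge> p0 - \<rho> ^ t" using h by linarith
    thus ?thesis using IND[of t] by linarith
  qed
  have rho1: "\<rho> < 1" unfolding \<rho>_def using A0p Dp by simp
  have bdd: "bdd_above (range (\<lambda>t. ?d t {}))"
    by (rule bdd_aboveI[where M=1]) (use dist_le1[OF good r0 x0V] in auto)
  have ext: "extinction_prob V out r x0 \<ge> p0"
  proof (rule ccontr)
    assume "\<not> ?thesis"
    hence lt: "extinction_prob V out r x0 < p0" by simp
    obtain n where n: "\<rho> ^ n < p0 - extinction_prob V out r x0"
      using real_arch_pow_inv[OF _ rho1, of "p0 - extinction_prob V out r x0"] lt by auto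
    have "?d n {} \<le> extinction_prob V out r x0"
      unfolding extinction_prob_def by (rule cSUP_upper[OF _ bdd]) simp
    thus False using Ebound[of n] n by linarith
  qed
  have m12: "real m \<ge> 12" using assms(1,5) by simp
  have "1 / (26 * r\<^sup>2 * real l) \<le> p0"
    unfolding p0_def Q_def A0_def B0_def G_def D_def L_def
    by (rule final_arith[OF assms(1) _ m12 W0p W1p]) (use assms(3) in simp)
  thus ?thesis using ext unfolding V_def out_def by simp
qed

end
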